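(* Let $G$ be a group. Call a finite subset $A\subseteq G$ \emph{strongly independent} if no subgroup of $G$ containing $A$ can be generated by fewer than $|A|$ elements. Then: (i) every subset of a finite strongly independent subset of $G$ is strongly independent, so the finite strongly independent subsets form a simplicial complex (the \emph{strong independence complex} of $G$); (ii) for $g\in G$, $\{g\}$ is strongly independent if and only if $g\neq 1$, so the vertices of this complex are exactly the non-identity elements of $G$; (iii) the $1$-skeleton of the strong independence complex is the complement of the enhanced power graph of $G$; that is, for distinct non-identity $x,y\in G$, the set $\{x,y\}$ is strongly independent if and only if $\langle x,y\rangle$ is not cyclic.
   Context: A simplicial complex on a set $X$ is a downward-closed collection of finite subsets (simplices) of $X$; its $1$-skeleton is the graph formed by the simplices of cardinality at most $2$. The enhanced power graph of $G$ is the graph on $G$ in which $x$ and $y$ are adjacent if and only if $\langle x,y\rangle$ is a cyclic group. *)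

theory Defs
  imports "HOL-Algebra.Elementary_Groups"
begin

definition strongly_independent :: "('a, 'b) monoid_scheme \<Rightarrow> 'a set \<Rightarrow> bool" where
  "strongly_independent G A \<longleftrightarrow>
     finite A \<and> A \<subseteq> carrier G \<and>
     (\<forall>H. subgroup H G \<and> A \<subseteq> H \<longrightarrow>
        \<not> (\<exists>S. finite S \<and> S \<subseteq> H \<and> card S < card A \<and> generate G S = H))"

end

theory Submission
  imports Defs
begin

lemma (in group) gen_singleton_powers:
  assumes "a \<in> carrier G"
  shows "generate G {a} = range (\<lambda>n::int. a [^] n)"
  using carrier_subgroup_generated_by_singleton[OF assms] assms
  by (simp add: carrier_subgroup_generated)

lemma (in group) two_in_cyclic:
  assumes a: "a \<in> carrier G" and x: "x \<in> generate G {a}" and y: "y \<in> generate G {a}"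
  shows "cyclic_group (subgroup_generated G {x, y})"
proof -
  obtain m :: int where xm: "x = a [^] m" using x gen_singleton_powers[OF a] by auto
  obtain n :: int where yn: "y = a [^] n" using y gen_singleton_powers[OF a] by auto
  define d where "d = gcd m n"
  define b where "b = a [^] d"
  have xc: "x \<in> carrier G" and yc: "y \<in> carrier G" using xm yn a by auto
  have bc: "b \<in> carrier G" using a b_def by auto
  have sb: "subgroup (generate G {b}) G" using bc generate_is_subgroup by auto
  have sxy: "subgroup (generate G {x, y}) G" using xc yc generate_is_subgroup by auto
  have binb: "b \<in> generate G {b}" by (simp add: generate.incl)
  have "x = b [^] (m div d)"
    by (simp add: xm b_def int_pow_pow a d_def)
  hence xin: "x \<in> generate G {b}" using subgroup_int_pow_closed[OF sb binb] by simp
  have "y = b [^] (n div d)"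
    by (simp add: yn b_def int_pow_pow a d_def)
  hence yin: "y \<in> generate G {b}" using subgroup_int_pow_closed[OF sb binb] by simp
  obtain u v where uv: "u * m + v * n = d" using bezout_int d_def by metis
  have "b = a [^] (m * u + n * v)" using uv b_def by (simp add: algebra_simps)
  also have "\<dots> = x [^] u \<otimes> y [^] v"
    by (simp add: int_pow_mult a int_pow_pow xm yn)
  finally have "b \<in> generate G {x, y}"
    using subgroup_int_pow_closed[OF sxy] subgroup.m_closed[OF sxy] generate.incl[of _ "{x,y}" G]
    by simp
  hence eq: "generate G {x, y} = generate G {b}"
    using generate_subgroup_incl[OF _ sb, of "{x,y}"] generate_subgroup_incl[OF _ sxy, of "{b}"]
      xin yin by auto
  have "subgroup_generated G {x, y} = subgroup_generated G {b}"
    unfolding subgroup_generated_def using xc yc bc eq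
    by (simp add: Int_absorb1)
  thus ?thesis using cyclic_group_generated by simp
qed

theorem mainTheorem2:
  fixes G (structure)
  assumes "group G"
  shows "(\<forall>A B. strongly_independent G A \<and> B \<subseteq> A \<longrightarrow> strongly_independent G B)
       \<and> (\<forall>g \<in> carrier G. strongly_independent G {g} \<longleftrightarrow> g \<noteq> \<one>)
       \<and> (\<forall>x \<in> carrier G. \<forall>y \<in> carrier G. x \<noteq> y \<and> x \<noteq> \<one> \<and> y \<noteq> \<one> \<longrightarrow>
            (strongly_independent G {x, y} \<longleftrightarrow> \<not> cyclic_group (subgroup_generated G {x, y})))"
proof (intro conjI allI impI ballI)
  interpret group G by fact
  fix A B assume h: "strongly_independent G A \<and> B \<subseteq> A"
  hence fA: "finite A" and AG: "A \<subseteq> carrier G" and BA: "B \<subseteq> A"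
    and nA: "\<And>H S. subgroup H G \<Longrightarrow> A \<subseteq> H \<Longrightarrow> finite S \<Longrightarrow> S \<subseteq> H \<Longrightarrow> generate G S = H \<Longrightarrow> \<not> card S < card A"
    unfolding strongly_independent_def by blast+
  show "strongly_independent G B"
    unfolding strongly_independent_def
  proof (intro conjI allI impI notI)
    show "finite B" using fA BA finite_subset by blast
    show "B \<subseteq> carrier G" using AG BA by blast
    fix H assume H: "subgroup H G \<and> B \<subseteq> H"
      and "\<exists>S. finite S \<and> S \<subseteq> H \<and> card S < card B \<and> generate G S = H"
    then obtain S where S: "finite S" "S \<subseteq> H" "card S < card B" "generate G S = H" by blast
    have SG: "S \<subseteq> carrier G" using S H subgroup.subset by blast
    let ?T = "S \<union> (A - B)"
    have TG: "?T \<subseteq> carrier G" using SG AG by blast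
    have fT: "finite ?T" using S fA by blast
    have "A \<subseteq> generate G ?T"
    proof -
      have "B \<subseteq> generate G ?T" using H S mono_generate[of S ?T] by blast
      moreover have "A - B \<subseteq> generate G ?T" using generate.incl[of _ ?T G] by blast
      ultimately show ?thesis by blast
    qed
    moreover have "card ?T < card A"
    proof -
      have "card ?T \<le> card S + card (A - B)" by (rule card_Un_le)
      also have "card (A - B) = card A - card B" using fA BA by (simp add: card_Diff_subset finite_subset)
      finally show ?thesis using S(3) card_mono[OF fA BA] by linarith
    qed
    moreover have "?T \<subseteq> generate G ?T" using generate.incl[of _ ?T G] by blast
    ultimately show False using nA[OF generate_is_subgroup[OF TG] _ fT]
      by blast
  qed
next
  interpret group G by fact
  fix g assume g: "g \<in> carrier G"
  show "strongly_independent G {g} \<longleftrightarrow> g \<noteq> \<one>"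
  proof
    assume si: "strongly_independent G {g}"
    show "g \<noteq> \<one>"
    proof
      assume "g = \<one>"
      hence "subgroup {\<one>} G \<and> {g} \<subseteq> {\<one>} \<and> finite {} \<and> {} \<subseteq> {\<one>} \<and> card ({}::'a set) < card {g} \<and> generate G {} = {\<one>}"
        using generate_empty generate_is_subgroup[of "{}"] by auto
      thus False using si unfolding strongly_independent_def by blast
    qed
  next
    assume g1: "g \<noteq> \<one>"
    show "strongly_independent G {g}"
      unfolding strongly_independent_def
    proof (intro conjI allI impI notI)
      fix H assume H: "subgroup H G \<and> {g} \<subseteq> H"
        and "\<exists>S. finite S \<and> S \<subseteq> H \<and> card S < card {g} \<and> generate G S = H"
      then obtain S where S: "finite S" "card S < card {g}" "generate G S = H" by blast
      hence "S = {}" by auto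
      thus False using S H g1 generate_empty by auto
    qed (use g in auto)
  qed
next
  interpret group G by fact
  fix x y assume x: "x \<in> carrier G" and y: "y \<in> carrier G"
    and d: "x \<noteq> y \<and> x \<noteq> \<one> \<and> y \<noteq> \<one>"
  have c2: "card {x, y} = 2" using d by auto
  show "strongly_independent G {x, y} \<longleftrightarrow> \<not> cyclic_group (subgroup_generated G {x, y})"
  proof
    assume si: "strongly_independent G {x, y}"
    show "\<not> cyclic_group (subgroup_generated G {x, y})"
    proof
      assume "cyclic_group (subgroup_generated G {x, y})"
      then obtain a where a: "a \<in> carrier (subgroup_generated G {x, y})"
        and eq: "subgroup_generated (subgroup_generated G {x, y}) {a} = subgroup_generated G {x, y}"
        unfolding cyclic_group_def by blast
      have cxy: "carrier (subgroup_generated G {x, y}) = generate G {x, y}"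
        using x y by (simp add: carrier_subgroup_generated Int_absorb1)
      have sxy: "subgroup (generate G {x, y}) G" using x y generate_is_subgroup by auto
      have aG: "a \<in> carrier G" using a cxy subgroup.subset[OF sxy] by auto
      have sgd: "subgroup_generated G {x, y} = G\<lparr>carrier := generate G {x, y}\<rparr>"
        unfolding subgroup_generated_def using x y by (simp add: Int_absorb1)
      have "generate G {x, y} = carrier (subgroup_generated (subgroup_generated G {x, y}) {a})"
        using eq cxy by simp
      also have "\<dots> = generate (G\<lparr>carrier := generate G {x, y}\<rparr>) {a}"
        using a cxy by (simp add: carrier_subgroup_generated sgd)
      also have "\<dots> = generate G {a}"
        using generate_consistent[OF _ sxy, of "{a}"] a cxy by simp
      finally have "generate G {a} = generate G {x, y}" by simp
      hence "subgroup (generate G {a}) G \<and> {x, y} \<subseteq> generate G {a} \<and> finite {a} \<and> {a} \<subseteq> generate G {a}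
             \<and> card {a} < card {x, y} \<and> generate G {a} = generate G {a}"
        using c2 generate_is_subgroup[of "{a}"] aG generate.incl[of _ "{x,y}" G] generate.incl[of a "{a}" G]
        by auto
      thus False using si unfolding strongly_independent_def by blast
    qed
  next
    assume nc: "\<not> cyclic_group (subgroup_generated G {x, y})"
    show "strongly_independent G {x, y}"
      unfolding strongly_independent_def
    proof (intro conjI allI impI notI)
      fix H assume H: "subgroup H G \<and> {x, y} \<subseteq> H"
        and "\<exists>S. finite S \<and> S \<subseteq> H \<and> card S < card {x, y} \<and> generate G S = H"
      then obtain S where S: "finite S" "S \<subseteq> H" "card S < 2" "generate G S = H" using c2 by auto
      have "card S = 0 \<or> card S = 1" using S(3) by linarith
      then show False
      proof
        assume "card S = 0"
        hence "S = {}" using S(1) by auto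
        thus False using S H d generate_empty by auto
      next
        assume "card S = 1"
        then obtain a where "S = {a}" using card_1_singletonE by blast
        hence aG: "a \<in> carrier G" and xy: "x \<in> generate G {a}" "y \<in> generate G {a}"
          using S H subgroup.subset by auto
        show False using two_in_cyclic[OF aG xy] nc by simp
      qed
    qed (use x y in auto)
  qed
qed

end
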